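(* Suppose the sequence $\{\mathcal{G}[k]\}_{k\ge0}$ satisfies the joint strong-connectivity assumption with parameter $T$. Then for every substate $j\in\{1,\dots,N\}$, under the freshness-index rules, $\tau^{(j)}_i[k]\neq\omega$ for all $k\ge (N-1)T$ and all $i\in\mathcal{V}$.
   Context: Graphs. Nodes $\mathcal{V}=\{1,\dots,N\}$. At each time $k\in\mathbb{N}=\{0,1,2,\dots\}$ there is a directed graph $\mathcal{G}[k]=(\mathcal{V},\mathcal{E}[k])$; $(i,j)\in\mathcal{E}[k]$ means node $i$ can send information to node $j$ at time $k$. $\mathcal{N}_i[k]=\{l\neq i:(l,i)\in\mathcal{E}[k]\}$ is the set of neighbors of $i$ at time $k$. The union graph over an interval of times has vertex set $\mathcal{V}$ and edge set the union of the edge sets over that interval. Joint strong-connectivity assumption: there is $T\in\mathbb{N}_+=\{1,2,\dots\}$ such that for every $k\in\mathbb{N}$ the union graph over $[kT,(k+1)T)$ is strongly connected. Freshness indices. For each substate index $j\in\{1,\dots,N\}$ (node $j$ being the source node of substate $j$) and node $i$, node $i$ keeps $\tau^{(j)}_i[k]\in\{\omega\}\cup\mathbb{N}$, where $\omega$ is a special symbol. Initialization: $\tau^{(j)}_j[0]=0$, $\tau^{(j)}_i[0]=\omega$ for $i\neq j$. The source keeps $\tau^{(j)}_j[k]=0$ for all $k$. For $i\neq j$, let $\mathcal{M}^{(j)}_i[k]=\{l\in\mathcal{N}_i[k]:\tau^{(j)}_l[k]\neq\omega\}$. Case 1, $\tau^{(j)}_i[k]=\omega$: if $\mathcal{M}^{(j)}_i[k]\neq\emptyset$,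 let $u$ be any minimizer of $\tau^{(j)}_l[k]$ over $l\in\mathcal{M}^{(j)}_i[k]$ and set $\tau^{(j)}_i[k+1]=\tau^{(j)}_u[k]+1$; otherwise set $\tau^{(j)}_i[k+1]=\omega$. Case 2, $\tau^{(j)}_i[k]\neq\omega$: let $\mathcal{F}^{(j)}_i[k]=\{l\in\mathcal{M}^{(j)}_i[k]:\tau^{(j)}_l[k]<\tau^{(j)}_i[k]\}$; if nonempty, let $u$ be any minimizer of $\tau^{(j)}_l[k]$ over $\mathcal{F}^{(j)}_i[k]$ and set $\tau^{(j)}_i[k+1]=\tau^{(j)}_u[k]+1$; otherwise set $\tau^{(j)}_i[k+1]=\tau^{(j)}_i[k]+1$. *)

theory Defs
  imports Main
begin

text \<open>A time-varying directed graph is a map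
  E :: nat \<Rightarrow> (nat \<times> nat) set; (i,l) \<in> E k means node i can send to node l at time k.
  The special symbol omega is represented by None; a value t \<in> \<nat> by Some t.
  tau i k is the freshness index of node i at time k (for one fixed substate j).\<close>

definition nodes :: "nat \<Rightarrow> nat set" where
  "nodes N = {1..N}"

definition nbrs :: "(nat \<Rightarrow> (nat \<times> nat) set) \<Rightarrow> nat \<Rightarrow> nat \<Rightarrow> nat set" where
  "nbrs E i k = {l. l \<noteq> i \<and> (l, i) \<in> E k}"

definition union_edges :: "(nat \<Rightarrow> (nat \<times> nat) set) \<Rightarrow> nat \<Rightarrow> nat \<Rightarrow> (nat \<times> nat) set" where
  "union_edges E a b = (\<Union>k\<in>{a..<b}. E k)"

definition strongly_connected :: "nat set \<Rightarrow> (nat \<times> nat) set \<Rightarrow> bool" where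
  "strongly_connected V R \<longleftrightarrow> (\<forall>a\<in>V. \<forall>b\<in>V. (a, b) \<in> R\<^sup>*)"

definition graph_seq :: "nat \<Rightarrow> (nat \<Rightarrow> (nat \<times> nat) set) \<Rightarrow> bool" where
  "graph_seq N E \<longleftrightarrow> (\<forall>k. E k \<subseteq> nodes N \<times> nodes N)"

definition joint_strong_conn :: "nat \<Rightarrow> (nat \<Rightarrow> (nat \<times> nat) set) \<Rightarrow> nat \<Rightarrow> bool" where
  "joint_strong_conn N E T \<longleftrightarrow> T \<ge> 1 \<and>
     (\<forall>k. strongly_connected (nodes N) (union_edges E (k * T) ((k + 1) * T)))"

definition fresh_step :: "(nat \<Rightarrow> (nat \<times> nat) set) \<Rightarrow> (nat \<Rightarrow> nat \<Rightarrow> nat option) \<Rightarrow> nat \<Rightarrow> nat \<Rightarrow> bool" where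
  "fresh_step E tau i k \<longleftrightarrow>
     (let M = {l \<in> nbrs E i k. tau l k \<noteq> None} in
      case tau i k of
        None \<Rightarrow>
          (if M \<noteq> {} then
             (\<exists>u\<in>M. (\<forall>l\<in>M. the (tau u k) \<le> the (tau l k)) \<and> tau i (Suc k) = Some (the (tau u k) + 1))
           else tau i (Suc k) = None)
      | Some t \<Rightarrow>
          (let F = {l \<in> M. the (tau l k) < t} in
           if F \<noteq> {} then
             (\<exists>u\<in>F. (\<forall>l\<in>F. the (tau u k) \<le> the (tau l k)) \<and> tau i (Suc k) = Some (the (tau u k) + 1))
           else tau i (Suc k) = Some (t + 1)))"

definition fresh_rules :: "nat \<Rightarrow> (nat \<Rightarrow> (nat \<times> nat) set) \<Rightarrow> nat \<Rightarrow> (nat \<Rightarrow> nat \<Rightarrow> nat option) \<Rightarrow> bool" where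
  "fresh_rules N E j tau \<longleftrightarrow>
     (\<forall>i\<in>nodes N. i \<noteq> j \<longrightarrow> tau i 0 = None) \<and>
     (\<forall>k. tau j k = Some 0) \<and>
     (\<forall>k. \<forall>i\<in>nodes N. i \<noteq> j \<longrightarrow> fresh_step E tau i k)"

end

theory Submission
  imports Defs
begin

lemma step_mono:
  assumes "fresh_rules N E j tau" "i \<in> nodes N" "tau i k \<noteq> None"
  shows "tau i (Suc k) \<noteq> None"
proof (cases "i = j")
  case True then show ?thesis using assms by (simp add: fresh_rules_def)
next
  case False
  then have "fresh_step E tau i k" using assms by (simp add: fresh_rules_def)
  then show ?thesis using assms(3)
    unfolding fresh_step_def Let_def by (auto split: option.splits if_splits)
qed

lemma mono_le:
  assumes "fresh_rules N E j tau" "i \<in> nodes N" "tau i k \<noteq> None" "k \<le> k'"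
  shows "tau i k' \<noteq> None"
  using assms(4)
proof (induction k' rule: dec_induct)
  case base then show ?case using assms by simp
next
  case (step n) then show ?case using step_mono[OF assms(1,2)] by blast
qed

lemma spread:
  assumes "fresh_rules N E j tau" "i \<in> nodes N" "l \<noteq> i" "(l, i) \<in> E k" "tau l k \<noteq> None"
  shows "tau i (Suc k) \<noteq> None"
proof (cases "tau i k = None")
  case False then show ?thesis using step_mono[OF assms(1,2)] by blast
next
  case True
  show ?thesis
  proof (cases "i = j")
    case True then show ?thesis using assms by (simp add: fresh_rules_def)
  next
    case False
    then have fs: "fresh_step E tau i k" using assms by (simp add: fresh_rules_def)
    have "l \<in> {l \<in> nbrs E i k. tau l k \<noteq> None}" using assms by (simp add: nbrs_def)
    then have ne: "{l \<in> nbrs E i k. tau l k \<noteq> None} \<noteq> {}" by blast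
    show ?thesis using fs True ne unfolding fresh_step_def Let_def by auto
  qed
qed

lemma exit_edge:
  assumes "(a, b) \<in> R\<^sup>*" "a \<in> S" "b \<notin> S"
  shows "\<exists>x y. (x, y) \<in> R \<and> x \<in> S \<and> y \<notin> S"
  using assms
proof (induction rule: rtrancl_induct)
  case base then show ?case by simp
next
  case (step y z) then show ?case by blast
qed

theorem lemma3:
  fixes N T j :: nat and E :: "nat \<Rightarrow> (nat \<times> nat) set" and tau :: "nat \<Rightarrow> nat \<Rightarrow> nat option"
  assumes "graph_seq N E"
    and "joint_strong_conn N E T"
    and "j \<in> nodes N"
    and "fresh_rules N E j tau"
  shows "\<forall>k \<ge> (N - 1) * T. \<forall>i \<in> nodes N. tau i k \<noteq> None"
proof -
  define S where "S k = {i \<in> nodes N. tau i k \<noteq> None}" for k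
  have fin: "finite (S k)" for k unfolding S_def nodes_def by simp
  have Ssub: "S k \<subseteq> nodes N" for k unfolding S_def by auto
  have Smono: "k \<le> k' \<Longrightarrow> S k \<subseteq> S k'" for k k'
    unfolding S_def using mono_le[OF assms(4)] by blast
  have jS: "j \<in> S k" for k using assms(3,4) unfolding S_def fresh_rules_def by simp
  have grow: "S (m * T) = nodes N \<or> S (m * T) \<subset> S ((m + 1) * T)" for m
  proof (cases "S (m * T) = nodes N")
    case False
    then obtain b where b: "b \<in> nodes N" "b \<notin> S (m * T)" using Ssub by blast
    have "(j, b) \<in> (union_edges E (m * T) ((m + 1) * T))\<^sup>*"
      using assms(2,3) b unfolding joint_strong_conn_def strongly_connected_def by blast
    then obtain x y where xy: "(x, y) \<in> union_edges E (m * T) ((m + 1) * T)"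
      "x \<in> S (m * T)" "y \<notin> S (m * T)"
      using exit_edge[of j b _ "S (m*T)"] jS b by blast
    then obtain k where k: "k \<in> {m * T..<(m + 1) * T}" "(x, y) \<in> E k"
      unfolding union_edges_def by blast
    have yN: "y \<in> nodes N" using assms(1) k unfolding graph_seq_def by blast
    have xy_ne: "x \<noteq> y" using xy by blast
    have "x \<in> S k" using Smono[of "m*T" k] k xy by auto
    then have "tau y (Suc k) \<noteq> None"
      using spread[OF assms(4) yN xy_ne k(2)] unfolding S_def by blast
    then have "y \<in> S (Suc k)" using yN unfolding S_def by blast
    moreover have "S (Suc k) \<subseteq> S ((m+1)*T)" using Smono k by auto
    ultimately have "y \<in> S ((m+1)*T)" by blast
    moreover have "S (m*T) \<subseteq> S ((m+1)*T)" using Smono by simp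
    ultimately show ?thesis using xy by blast
  qed simp
  have cardN: "card (nodes N) = N" unfolding nodes_def by simp
  have cnt: "card (S (m * T)) \<ge> min N (m + 1)" for m
  proof (induction m)
    case 0
    have "card (S 0) \<ge> 1" using fin jS by (metis One_nat_def card_0_eq empty_iff not_less_eq_eq le0 le_antisym)
    then show ?case by simp
  next
    case (Suc m)
    from grow[of m] show ?case
    proof
      assume h: "S (m * T) = nodes N"
      have "S (m*T) \<subseteq> S (Suc m * T)" using Smono by simp
      then have "S (Suc m * T) = nodes N" using h Ssub by blast
      then show ?thesis using cardN by simp
    next
      assume "S (m * T) \<subset> S ((m + 1) * T)"
      then have "card (S (m*T)) < card (S (Suc m * T))" using fin psubset_card_mono by auto
      then show ?thesis using Suc by simp
    qed
  qed
  have N1: "N \<ge> 1" using assms(3) unfolding nodes_def by simp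
  have "card (S ((N - 1) * T)) \<ge> N" using cnt[of "N - 1"] N1 by simp
  moreover have "card (S ((N - 1) * T)) \<le> N" using card_mono[OF _ Ssub] cardN
    unfolding nodes_def by (metis finite_atLeastAtMost nodes_def)
  ultimately have "card (S ((N - 1) * T)) = card (nodes N)" using cardN by simp
  then have full: "S ((N - 1) * T) = nodes N"
    using Ssub card_subset_eq unfolding nodes_def by (metis finite_atLeastAtMost nodes_def)
  show ?thesis
  proof (intro allI impI ballI)
    fix k i assume "k \<ge> (N - 1) * T" "i \<in> nodes N"
    then have "i \<in> S k" using full Smono by blast
    then show "tau i k \<noteq> None" unfolding S_def by simp
  qed
qed

end
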